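(* Let $\alpha\in(0,1]$ and let $\mathcal{N}[\varphi]=\mathbb{E}[\varphi(\xi)]=\sup_{\mu\in\Theta}\mu[\varphi]$ be a sublinear expectation on $C_{b,Lip}(\mathbb{R})$ satisfying condition (H) below, with $\mathbb{E}[|\xi|^{1+\alpha}]<\infty$. Let $p_\xi(a)=\mathbb{E}[a\xi]$, $a\in\mathbb{R}$. Then for every $\phi\in C_b^{1,\alpha}(\mathbb{R})$ and every $\mu\in\Theta_\phi$, $$\big|E_\mu[\xi\phi'(\xi)-p_\xi(\phi'(\xi))]\big|\le 4[\phi']_\alpha\,\mathbb{E}[|\xi|^{1+\alpha}].$$
   Context: A sublinear expectation on $C_{b,Lip}(\mathbb{R})$ (bounded Lipschitz functions) is a monotone, positively homogeneous, constant-preserving, subadditive functional continuous from above along sequences decreasing to $0$; it is represented as $\mathcal{N}[\varphi]=\sup_{\mu\in\Theta}\mu[\varphi]$ for a weakly compact set $\Theta$ of Borel probability measures on $\mathbb{R}$, and is extended to other measurable functions by the same supremum. Notation: $\xi(x)=x$, $\mathbb{E}[\varphi(\xi)]=\mathcal{N}[\varphi]$, $E_\mu[\varphi(\xi)]=\int\varphi\,d\mu$, $\Theta_\phi=\{\mu\in\Theta:E_\mu[\phi(\xi)]=\mathbb{E}[\phi(\xi)]\}$. Condition (H): $\lim_{N\to\infty}\mathcal{N}[|x|1_{[|x|>N]}]=0$. $C_b^{1,\alpha}(\mathbb{R})$ is the set of bounded $C^1$ functions with bounded derivative whose derivative is $\alpha$-Hölder, and $[\phi']_\alpha=\sup_{x\ne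 y}|\phi'(x)-\phi'(y)|/|x-y|^\alpha$. *)

theory Defs
  imports "HOL-Probability.Probability"
begin

definition weak_conv_prob :: "(nat \<Rightarrow> real measure) \<Rightarrow> real measure \<Rightarrow> bool" where
  "weak_conv_prob Ms M \<longleftrightarrow>
     (\<forall>f :: real \<Rightarrow> real. continuous_on UNIV f \<longrightarrow> bounded (range f) \<longrightarrow>
        (\<lambda>n. integral\<^sup>L (Ms n) f) \<longlonglongrightarrow> integral\<^sup>L M f)"

text \<open>A weakly compact set of Borel probability measures on the reals
  (sequential compactness; the weak topology on probability measures on R is metrizable).\<close>
definition weakly_compact_probs :: "real measure set \<Rightarrow> bool" where
  "weakly_compact_probs Th \<longleftrightarrow>
     (\<forall>\<mu>\<in>Th. real_distribution \<mu>) \<and>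
     (\<forall>Ms. (\<forall>n. Ms n \<in> Th) \<longrightarrow>
        (\<exists>(r::nat \<Rightarrow> nat) \<mu>. strict_mono r \<and> \<mu> \<in> Th \<and> weak_conv_prob (Ms \<circ> r) \<mu>))"

definition sublinE :: "real measure set \<Rightarrow> (real \<Rightarrow> real) \<Rightarrow> ereal" where
  "sublinE Th f = (SUP \<mu>\<in>Th. ereal (integral\<^sup>L \<mu> f))"

definition sublinE_nn :: "real measure set \<Rightarrow> (real \<Rightarrow> real) \<Rightarrow> ennreal" where
  "sublinE_nn Th f = (SUP \<mu>\<in>Th. \<integral>\<^sup>+ x. ennreal (f x) \<partial>\<mu>)"

definition condH :: "real measure set \<Rightarrow> bool" where
  "condH Th \<longleftrightarrow>
     ((\<lambda>N::real. sublinE_nn Th (\<lambda>x. \<bar>x\<bar> * indicator {y. \<bar>y\<bar> > N} x)) \<longlongrightarrow> 0) at_top"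

definition p_xi :: "real measure set \<Rightarrow> real \<Rightarrow> real" where
  "p_xi Th a = real_of_ereal (sublinE Th (\<lambda>x. a * x))"

definition Theta_phi :: "real measure set \<Rightarrow> (real \<Rightarrow> real) \<Rightarrow> real measure set" where
  "Theta_phi Th \<phi> = {\<mu>\<in>Th. ereal (integral\<^sup>L \<mu> \<phi>) = sublinE Th \<phi>}"

definition C_b_1_alpha :: "real \<Rightarrow> (real \<Rightarrow> real) set" where
  "C_b_1_alpha \<alpha> = {\<phi>. (\<forall>x. \<phi> differentiable at x) \<and> continuous_on UNIV (deriv \<phi>) \<and>
      bounded (range \<phi>) \<and> bounded (range (deriv \<phi>)) \<and>
      (\<exists>C. \<forall>x y. \<bar>deriv \<phi> x - deriv \<phi> y\<bar> \<le> C * \<bar>x - y\<bar> powr \<alpha>)}"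

definition holder_seminorm :: "real \<Rightarrow> (real \<Rightarrow> real) \<Rightarrow> real" where
  "holder_seminorm \<alpha> g = (SUP (x, y)\<in>{(x, y). x \<noteq> y}. \<bar>g x - g y\<bar> / \<bar>x - y\<bar> powr \<alpha>)"

end

theory Submission imports Defs begin
lemma young_pt:
  fixes x y \<alpha> :: real assumes "0 < \<alpha>"
  shows "\<bar>x\<bar> powr \<alpha> * \<bar>y\<bar> \<le> (\<alpha> * \<bar>x\<bar> powr (1+\<alpha>) + \<bar>y\<bar> powr (1+\<alpha>)) / (1+\<alpha>)"
proof -
  have "\<bar>x\<bar> powr \<alpha> * \<bar>y\<bar> \<le> (\<bar>x\<bar> powr \<alpha>) powr ((1+\<alpha>)/\<alpha>) / ((1+\<alpha>)/\<alpha>) + \<bar>y\<bar> powr (1+\<alpha>) / (1+\<alpha>)"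
    by (rule Youngs_inequality) (use assms in \<open>auto simp: field_simps\<close>)
  also have "(\<bar>x\<bar> powr \<alpha>) powr ((1+\<alpha>)/\<alpha>) = \<bar>x\<bar> powr (1+\<alpha>)"
    using assms by (simp add: powr_powr)
  also have "\<bar>x\<bar> powr (1+\<alpha>) / ((1+\<alpha>)/\<alpha>) = \<alpha> * \<bar>x\<bar> powr (1+\<alpha>) / (1+\<alpha>)"
    using assms by (simp add: field_simps)
  finally show ?thesis by (simp add: add_divide_distrib)
qed

lemma abs_le_powr:
  fixes x \<alpha> :: real assumes "0 \<le> \<alpha>"
  shows "\<bar>x\<bar> \<le> 1 + \<bar>x\<bar> powr (1+\<alpha>)"
proof (cases "\<bar>x\<bar> \<le> 1")
  case True then show ?thesis by (smt (verit) powr_ge_zero)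
next
  case False
  then have "\<bar>x\<bar> powr 1 \<le> \<bar>x\<bar> powr (1+\<alpha>)" using assms by (intro powr_mono) auto
  then show ?thesis using False by simp
qed

lemma powr_le_powr1:
  fixes x \<alpha> :: real assumes "0 \<le> \<alpha>" "\<alpha> \<le> 1"
  shows "\<bar>x\<bar> powr \<alpha> \<le> 1 + \<bar>x\<bar> powr (1+\<alpha>)"
proof (cases "\<bar>x\<bar> \<le> 1")
  case True
  then have "\<bar>x\<bar> powr \<alpha> \<le> 1" using assms powr_mono2[of \<alpha> "\<bar>x\<bar>" 1] by simp
  then show ?thesis by (smt (verit) powr_ge_zero)
next
  case False
  then have "\<bar>x\<bar> powr \<alpha> \<le> \<bar>x\<bar> powr (1+\<alpha>)" using assms by (intro powr_mono) auto
  then show ?thesis by simp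
qed

lemma taylor_holder:
  fixes \<phi> :: "real \<Rightarrow> real" and H \<alpha> x :: real
  assumes diff: "\<And>x. \<phi> differentiable at x" and "0 < \<alpha>"
    and hold: "\<And>x y. \<bar>deriv \<phi> x - deriv \<phi> y\<bar> \<le> H * \<bar>x - y\<bar> powr \<alpha>"
  shows "\<bar>\<phi> x - \<phi> 0 - deriv \<phi> 0 * x\<bar> \<le> H * \<bar>x\<bar> powr (1+\<alpha>)"
proof -
  have H0: "0 \<le> H" using hold[of 1 0] by (smt (verit) powr_one_eq_one zero_le_mult_iff abs_ge_zero)
  have D: "\<And>z. (\<phi> has_real_derivative deriv \<phi> z) (at z)"
    using diff by (simp add: DERIV_deriv_iff_real_differentiable)
  have key: "\<exists>z. \<bar>z\<bar> \<le> \<bar>x\<bar> \<and> \<phi> x - \<phi> 0 = x * deriv \<phi> z"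
  proof (cases "x = 0")
    case True then show ?thesis by auto
  next
    case False
    show ?thesis
    proof (cases "0 < x")
      case True
      from MVT2[OF True, of \<phi> "deriv \<phi>"] D obtain z where "0 < z" "z < x" "\<phi> x - \<phi> 0 = (x - 0) * deriv \<phi> z" by blast
      then show ?thesis by (intro exI[of _ z]) auto
    next
      case f2: False
      with False have "x < 0" by simp
      from MVT2[OF this, of \<phi> "deriv \<phi>"] D obtain z where "x < z" "z < 0" "\<phi> 0 - \<phi> x = (0 - x) * deriv \<phi> z" by blast
      then show ?thesis by (intro exI[of _ z]) (auto simp: algebra_simps)
    qed
  qed
  then obtain z where z: "\<bar>z\<bar> \<le> \<bar>x\<bar>" "\<phi> x - \<phi> 0 = x * deriv \<phi> z" by blast
  have "\<bar>\<phi> x - \<phi> 0 - deriv \<phi> 0 * x\<bar> = \<bar>x\<bar> * \<bar>deriv \<phi> z - deriv \<phi> 0\<bar>"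
    using z(2) by (simp add: abs_mult[symmetric] algebra_simps)
  also have "\<dots> \<le> \<bar>x\<bar> * (H * \<bar>z\<bar> powr \<alpha>)"
    using hold[of z 0] by (intro mult_left_mono) auto
  also have "\<dots> \<le> \<bar>x\<bar> * (H * \<bar>x\<bar> powr \<alpha>)"
    using z(1) H0 assms(2) by (intro mult_left_mono powr_mono2) auto
  also have "\<dots> = H * \<bar>x\<bar> powr (1+\<alpha>)"
    by (cases "x = 0") (auto simp: powr_add)
  finally show ?thesis .
qed

lemma ereal_sup_props:
  fixes f :: "'a \<Rightarrow> real"
  assumes "S \<noteq> {}" "\<And>s. s \<in> S \<Longrightarrow> f s \<le> B"
  shows "\<And>s. s \<in> S \<Longrightarrow> f s \<le> real_of_ereal (SUP s\<in>S. ereal (f s))"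
    and "\<And>B'. (\<And>s. s \<in> S \<Longrightarrow> f s \<le> B') \<Longrightarrow> real_of_ereal (SUP s\<in>S. ereal (f s)) \<le> B'"
proof -
  obtain s0 where s0: "s0 \<in> S" using assms(1) by blast
  have up: "(SUP s\<in>S. ereal (f s)) \<le> ereal B" using assms(2) by (auto intro!: SUP_least)
  have lo: "ereal (f s0) \<le> (SUP s\<in>S. ereal (f s))" using s0 by (rule SUP_upper)
  obtain r where r: "(SUP s\<in>S. ereal (f s)) = ereal r"
    using up lo by (cases "(SUP s\<in>S. ereal (f s))") auto
  show "\<And>s. s \<in> S \<Longrightarrow> f s \<le> real_of_ereal (SUP s\<in>S. ereal (f s))"
  proof -
    fix s assume "s \<in> S"
    then have "ereal (f s) \<le> ereal r" using r by (metis SUP_upper)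
    then show "f s \<le> real_of_ereal (SUP s\<in>S. ereal (f s))" using r by simp
  qed
  show "\<And>B'. (\<And>s. s \<in> S \<Longrightarrow> f s \<le> B') \<Longrightarrow> real_of_ereal (SUP s\<in>S. ereal (f s)) \<le> B'"
  proof -
    fix B' assume "\<And>s. s \<in> S \<Longrightarrow> f s \<le> B'"
    then have "(SUP s\<in>S. ereal (f s)) \<le> ereal B'" by (auto intro!: SUP_least)
    then show "real_of_ereal (SUP s\<in>S. ereal (f s)) \<le> B'" using r by simp
  qed
qed

theorem lemma3p2:
  fixes \<alpha> :: real and Th :: "real measure set" and \<phi> :: "real \<Rightarrow> real" and \<mu> :: "real measure"
  assumes "0 < \<alpha>" and "\<alpha> \<le> 1"
    and "weakly_compact_probs Th"
    and "condH Th"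
    and "sublinE_nn Th (\<lambda>x. \<bar>x\<bar> powr (1 + \<alpha>)) < \<infinity>"
    and "\<phi> \<in> C_b_1_alpha \<alpha>"
    and "\<mu> \<in> Theta_phi Th \<phi>"
  shows "\<bar>\<integral>x. (x * deriv \<phi> x - p_xi Th (deriv \<phi> x)) \<partial>\<mu>\<bar>
           \<le> 4 * holder_seminorm \<alpha> (deriv \<phi>) * enn2real (sublinE_nn Th (\<lambda>x. \<bar>x\<bar> powr (1 + \<alpha>)))"
proof -
  define g where "g = deriv \<phi>"
  define H where "H = holder_seminorm \<alpha> g"
  define Mnn where "Mnn = sublinE_nn Th (\<lambda>x. \<bar>x\<bar> powr (1 + \<alpha>))"
  define M where "M = enn2real Mnn"
  define p where "p = p_xi Th"
  have a0: "0 < \<alpha>" and a1: "\<alpha> \<le> 1" using assms by auto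
  from assms(6) have diff: "\<And>x. \<phi> differentiable at x" and gc: "continuous_on UNIV g"
    and bphi: "bounded (range \<phi>)" and bg: "bounded (range g)"
    and exC: "\<exists>C. \<forall>x y. \<bar>g x - g y\<bar> \<le> C * \<bar>x - y\<bar> powr \<alpha>"
    unfolding C_b_1_alpha_def g_def by auto
  have RD: "\<And>\<nu>. \<nu> \<in> Th \<Longrightarrow> real_distribution \<nu>"
    using assms(3) unfolding weakly_compact_probs_def by auto
  have PS: "\<And>\<nu>. \<nu> \<in> Th \<Longrightarrow> prob_space \<nu>" using RD real_distribution_def by blast
  have MEAS: "\<And>\<nu> f. \<nu> \<in> Th \<Longrightarrow> f \<in> borel_measurable borel \<Longrightarrow> f \<in> borel_measurable \<nu>"
    using RD real_distribution.measurable_finite_borel by blast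
  have ICONST: "\<And>\<nu> c. \<nu> \<in> Th \<Longrightarrow> integrable \<nu> (\<lambda>x. (c::real))"
    using PS prob_space.finite_measure finite_measure.integrable_const by blast
  have LCONST: "\<And>\<nu> c. \<nu> \<in> Th \<Longrightarrow> integral\<^sup>L \<nu> (\<lambda>x. (c::real)) = c"
    using PS by (simp add: prob_space.prob_space)
  have muTh: "\<mu> \<in> Th" and optE: "ereal (integral\<^sup>L \<mu> \<phi>) = sublinE Th \<phi>"
    using assms(7) unfolding Theta_phi_def by auto
  have ThNE: "Th \<noteq> {}" using muTh by auto

  obtain C where C: "\<And>x y. \<bar>g x - g y\<bar> \<le> C * \<bar>x - y\<bar> powr \<alpha>" using exC by blast
  have bddH: "bdd_above ((\<lambda>(x, y). \<bar>g x - g y\<bar> / \<bar>x - y\<bar> powr \<alpha>) ` {(x, y). x \<noteq> y})"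
  proof (rule bdd_aboveI2)
    fix z assume "z \<in> {(x, y). x \<noteq> (y::real)}"
    then obtain x y where z: "z = (x, y)" "x \<noteq> y" by auto
    then have "0 < \<bar>x - y\<bar> powr \<alpha>" by simp
    then show "(\<lambda>(x, y). \<bar>g x - g y\<bar> / \<bar>x - y\<bar> powr \<alpha>) z \<le> C"
      using z C[of x y] by (simp add: divide_le_eq)
  qed
  have hold: "\<And>x y. \<bar>g x - g y\<bar> \<le> H * \<bar>x - y\<bar> powr \<alpha>"
  proof -
    fix x y :: real
    show "\<bar>g x - g y\<bar> \<le> H * \<bar>x - y\<bar> powr \<alpha>"
    proof (cases "x = y")
      case True then show ?thesis by simp
    next
      case False
      have "(\<lambda>(x, y). \<bar>g x - g y\<bar> / \<bar>x - y\<bar> powr \<alpha>) (x, y) \<le> H"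
        unfolding H_def holder_seminorm_def using False bddH by (intro cSUP_upper) auto
      moreover have "0 < \<bar>x - y\<bar> powr \<alpha>" using False by simp
      ultimately show ?thesis by (simp add: divide_le_eq mult.commute)
    qed
  qed
  have H0: "0 \<le> H" using hold[of 1 0] by (smt (verit) powr_one_eq_one zero_le_mult_iff abs_ge_zero)

  have Mfin: "Mnn < \<infinity>" using assms(5) unfolding Mnn_def .
  have M0: "0 \<le> M" unfolding M_def by simp
  have measP: "(\<lambda>x::real. \<bar>x\<bar> powr (1+\<alpha>)) \<in> borel_measurable borel" by measurable
  have measA: "(\<lambda>x::real. \<bar>x\<bar> powr \<alpha>) \<in> borel_measurable borel" by measurable
  have nnle: "\<And>\<nu>. \<nu> \<in> Th \<Longrightarrow> (\<integral>\<^sup>+x. ennreal (\<bar>x\<bar> powr (1+\<alpha>)) \<partial>\<nu>) \<le> Mnn"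
    unfolding Mnn_def sublinE_nn_def by (rule SUP_upper)
  have intP: "\<And>\<nu>. \<nu> \<in> Th \<Longrightarrow> integrable \<nu> (\<lambda>x. \<bar>x\<bar> powr (1+\<alpha>))"
  proof -
    fix \<nu> assume nu: "\<nu> \<in> Th"
    show "integrable \<nu> (\<lambda>x. \<bar>x\<bar> powr (1+\<alpha>))"
    proof (rule integrableI_bounded)
      show "(\<lambda>x. \<bar>x\<bar> powr (1+\<alpha>)) \<in> borel_measurable \<nu>" using MEAS[OF nu measP] .
      show "(\<integral>\<^sup>+x. ennreal (norm (\<bar>x\<bar> powr (1+\<alpha>))) \<partial>\<nu>) < \<infinity>"
        using nnle[OF nu] Mfin by simp
    qed
  qed
  have EP: "\<And>\<nu>. \<nu> \<in> Th \<Longrightarrow> integral\<^sup>L \<nu> (\<lambda>x. \<bar>x\<bar> powr (1+\<alpha>)) \<le> M"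
  proof -
    fix \<nu> assume nu: "\<nu> \<in> Th"
    have "integral\<^sup>L \<nu> (\<lambda>x. \<bar>x\<bar> powr (1+\<alpha>)) = enn2real (\<integral>\<^sup>+x. ennreal (\<bar>x\<bar> powr (1+\<alpha>)) \<partial>\<nu>)"
      using MEAS[OF nu measP] by (intro integral_eq_nn_integral) auto
    also have "\<dots> \<le> M" unfolding M_def using nnle[OF nu] Mfin enn2real_mono by (metis infinity_ennreal_def)
    finally show "integral\<^sup>L \<nu> (\<lambda>x. \<bar>x\<bar> powr (1+\<alpha>)) \<le> M" .
  qed
  have int1P: "\<And>\<nu>. \<nu> \<in> Th \<Longrightarrow> integrable \<nu> (\<lambda>x. 1 + \<bar>x\<bar> powr (1+\<alpha>))"
  proof -
    fix \<nu> assume nu: "\<nu> \<in> Th"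
    show "integrable \<nu> (\<lambda>x. 1 + \<bar>x\<bar> powr (1+\<alpha>))" by (rule Bochner_Integration.integrable_add[OF ICONST[OF nu] intP[OF nu]])
  qed
  have E1P: "\<And>\<nu>. \<nu> \<in> Th \<Longrightarrow> integral\<^sup>L \<nu> (\<lambda>x. 1 + \<bar>x\<bar> powr (1+\<alpha>)) \<le> 1 + M"
  proof -
    fix \<nu> assume nu: "\<nu> \<in> Th"
    have "integral\<^sup>L \<nu> (\<lambda>x. 1 + \<bar>x\<bar> powr (1+\<alpha>)) = integral\<^sup>L \<nu> (\<lambda>x. 1) + integral\<^sup>L \<nu> (\<lambda>x. \<bar>x\<bar> powr (1+\<alpha>))"
      by (rule Bochner_Integration.integral_add[OF ICONST[OF nu] intP[OF nu]])
    then show "integral\<^sup>L \<nu> (\<lambda>x. 1 + \<bar>x\<bar> powr (1+\<alpha>)) \<le> 1 + M" using LCONST[OF nu, of 1] EP[OF nu] by linarith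
  qed
  have intX: "\<And>\<nu>. \<nu> \<in> Th \<Longrightarrow> integrable \<nu> (\<lambda>x. x)"
  proof -
    fix \<nu> assume nu: "\<nu> \<in> Th"
    show "integrable \<nu> (\<lambda>x. x)"
    proof (rule Bochner_Integration.integrable_bound[OF int1P[OF nu]])
      show "(\<lambda>x. x) \<in> borel_measurable \<nu>" by (rule MEAS[OF nu]) simp
      have "\<And>x::real. norm x \<le> norm (1 + \<bar>x\<bar> powr (1+\<alpha>))"
        using abs_le_powr[of \<alpha>] a0 by (simp add: real_norm_def)
      then show "AE x in \<nu>. norm x \<le> norm (1 + \<bar>x\<bar> powr (1+\<alpha>))" by simp
    qed
  qed
  have intAX: "\<And>\<nu>. \<nu> \<in> Th \<Longrightarrow> integrable \<nu> (\<lambda>x. \<bar>x\<bar>)"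
    using intX by (intro integrable_abs) auto
  have EX: "\<And>\<nu>. \<nu> \<in> Th \<Longrightarrow> integral\<^sup>L \<nu> (\<lambda>x. \<bar>x\<bar>) \<le> 1 + M"
  proof -
    fix \<nu> assume nu: "\<nu> \<in> Th"
    have "integral\<^sup>L \<nu> (\<lambda>x. \<bar>x\<bar>) \<le> integral\<^sup>L \<nu> (\<lambda>x. 1 + \<bar>x\<bar> powr (1+\<alpha>))"
      using intAX[OF nu] int1P[OF nu] abs_le_powr[of \<alpha>] a0 by (intro integral_mono) simp_all
    then show "integral\<^sup>L \<nu> (\<lambda>x. \<bar>x\<bar>) \<le> 1 + M" using E1P[OF nu] by simp
  qed
  define m where "m = (\<lambda>\<nu>::real measure. integral\<^sup>L \<nu> (\<lambda>x::real. x))"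
  have mabs: "\<And>\<nu>. \<nu> \<in> Th \<Longrightarrow> \<bar>m \<nu>\<bar> \<le> integral\<^sup>L \<nu> (\<lambda>x. \<bar>x\<bar>)"
    unfolding m_def using integral_norm_bound[of _ "\<lambda>x::real. x"] by simp
  have intA: "integrable \<mu> (\<lambda>x. \<bar>x\<bar> powr \<alpha>)"
  proof (rule Bochner_Integration.integrable_bound[OF int1P[OF muTh]])
    show "(\<lambda>x. \<bar>x\<bar> powr \<alpha>) \<in> borel_measurable \<mu>" using MEAS[OF muTh measA] .
    have "\<And>x::real. norm (\<bar>x\<bar> powr \<alpha>) \<le> norm (1 + \<bar>x\<bar> powr (1+\<alpha>))"
      using powr_le_powr1[of \<alpha>] a0 a1 by (simp add: real_norm_def)
    then show "AE x in \<mu>. norm (\<bar>x\<bar> powr \<alpha>) \<le> norm (1 + \<bar>x\<bar> powr (1+\<alpha>))" by simp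
  qed
  define A where "A = integral\<^sup>L \<mu> (\<lambda>x. \<bar>x\<bar> powr \<alpha>)"
  have A0: "0 \<le> A" unfolding A_def by (rule Bochner_Integration.integral_nonneg) auto

  have young: "\<And>\<nu>. \<nu> \<in> Th \<Longrightarrow> \<bar>m \<nu>\<bar> * A \<le> M"
  proof -
    fix \<nu> assume nu: "\<nu> \<in> Th"
    have pt: "\<bar>y\<bar> * A \<le> (\<alpha> * M + \<bar>y\<bar> powr (1+\<alpha>)) / (1+\<alpha>)" for y :: real
    proof -
      have "\<bar>y\<bar> * A = integral\<^sup>L \<mu> (\<lambda>x. \<bar>x\<bar> powr \<alpha> * \<bar>y\<bar>)"
        unfolding A_def by (simp add: mult.commute)
      also have "\<dots> \<le> integral\<^sup>L \<mu> (\<lambda>x. \<alpha> / (1+\<alpha>) * \<bar>x\<bar> powr (1+\<alpha>) + \<bar>y\<bar> powr (1+\<alpha>) / (1+\<alpha>))"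
      proof (rule integral_mono)
        show "integrable \<mu> (\<lambda>x. \<bar>x\<bar> powr \<alpha> * \<bar>y\<bar>)" using intA by simp
        show "integrable \<mu> (\<lambda>x. \<alpha> / (1+\<alpha>) * \<bar>x\<bar> powr (1+\<alpha>) + \<bar>y\<bar> powr (1+\<alpha>) / (1+\<alpha>))"
          by (rule Bochner_Integration.integrable_add) (use intP[OF muTh] ICONST[OF muTh] in simp_all)
        show "\<bar>x\<bar> powr \<alpha> * \<bar>y\<bar> \<le> \<alpha> / (1+\<alpha>) * \<bar>x\<bar> powr (1+\<alpha>) + \<bar>y\<bar> powr (1+\<alpha>) / (1+\<alpha>)" for x
          using young_pt[OF a0, of x y] by (simp add: add_divide_distrib)
      qed
      also have "\<dots> = \<alpha> / (1+\<alpha>) * integral\<^sup>L \<mu> (\<lambda>x. \<bar>x\<bar> powr (1+\<alpha>)) + \<bar>y\<bar> powr (1+\<alpha>) / (1+\<alpha>)"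
        using intP[OF muTh] ICONST[OF muTh] LCONST[OF muTh] by simp
      also have "\<dots> \<le> \<alpha> / (1+\<alpha>) * M + \<bar>y\<bar> powr (1+\<alpha>) / (1+\<alpha>)"
        using EP[OF muTh] a0 by (intro add_right_mono mult_left_mono) auto
      finally show ?thesis by (simp add: add_divide_distrib)
    qed
    have "\<bar>m \<nu>\<bar> * A \<le> integral\<^sup>L \<nu> (\<lambda>y. \<bar>y\<bar>) * A"
      using mabs[OF nu] A0 by (rule mult_right_mono)
    also have "\<dots> = integral\<^sup>L \<nu> (\<lambda>y. \<bar>y\<bar> * A)" by simp
    also have "\<dots> \<le> integral\<^sup>L \<nu> (\<lambda>y. \<alpha> / (1+\<alpha>) * M + \<bar>y\<bar> powr (1+\<alpha>) / (1+\<alpha>))"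
    proof (rule integral_mono)
      show "integrable \<nu> (\<lambda>y. \<bar>y\<bar> * A)" using intAX[OF nu] by simp
      show "integrable \<nu> (\<lambda>y. \<alpha> / (1+\<alpha>) * M + \<bar>y\<bar> powr (1+\<alpha>) / (1+\<alpha>))"
        by (rule Bochner_Integration.integrable_add) (use intP[OF nu] ICONST[OF nu] in simp_all)
      show "\<bar>y\<bar> * A \<le> \<alpha> / (1+\<alpha>) * M + \<bar>y\<bar> powr (1+\<alpha>) / (1+\<alpha>)" for y
        using pt[of y] by (simp add: add_divide_distrib)
    qed
    also have "\<dots> = \<alpha> / (1+\<alpha>) * M + integral\<^sup>L \<nu> (\<lambda>y. \<bar>y\<bar> powr (1+\<alpha>)) / (1+\<alpha>)"
      using intP[OF nu] ICONST[OF nu] LCONST[OF nu] by simp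
    also have "\<dots> \<le> \<alpha> / (1+\<alpha>) * M + M / (1+\<alpha>)"
      using EP[OF nu] a0 by (intro add_left_mono divide_right_mono) auto
    also have "\<dots> = (1+\<alpha>) * M / (1+\<alpha>)" by (simp add: add_divide_distrib algebra_simps)
    also have "\<dots> = M" using a0 by simp
    finally show "\<bar>m \<nu>\<bar> * A \<le> M" .
  qed

  define K where "K = (SUP \<nu>\<in>Th. \<bar>m \<nu>\<bar>)"
  have bddK: "bdd_above ((\<lambda>\<nu>. \<bar>m \<nu>\<bar>) ` Th)"
    by (rule bdd_aboveI2[where M="1+M"]) (use mabs EX in force)
  have mK: "\<And>\<nu>. \<nu> \<in> Th \<Longrightarrow> \<bar>m \<nu>\<bar> \<le> K"
    unfolding K_def using bddK by (intro cSUP_upper) auto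
  have K0: "0 \<le> K" using mK[OF muTh] by linarith
  have KA: "K * A \<le> M"
  proof (cases "A = 0")
    case True then show ?thesis using M0 by simp
  next
    case False
    then have Ap: "0 < A" using A0 by simp
    have "K \<le> M / A" unfolding K_def
      using young Ap by (intro cSUP_least[OF ThNE]) (simp add: pos_le_divide_eq)
    then show ?thesis using Ap by (simp add: pos_le_divide_eq)
  qed

  have pform: "\<And>a. p a = real_of_ereal (SUP \<nu>\<in>Th. ereal (a * m \<nu>))"
    unfolding p_def p_xi_def sublinE_def m_def by simp
  have bnd: "\<And>a \<nu>. \<nu> \<in> Th \<Longrightarrow> a * m \<nu> \<le> \<bar>a\<bar> * K"
  proof -
    fix a \<nu> assume nu: "\<nu> \<in> Th"
    have "a * m \<nu> \<le> \<bar>a\<bar> * \<bar>m \<nu>\<bar>" by (simp add: abs_mult[symmetric])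
    also have "\<dots> \<le> \<bar>a\<bar> * K" using mK[OF nu] by (intro mult_left_mono) auto
    finally show "a * m \<nu> \<le> \<bar>a\<bar> * K" .
  qed
  have pge: "a * m \<nu> \<le> p a" if "\<nu> \<in> Th" for a \<nu>
    unfolding pform by (rule ereal_sup_props(1)[of Th "\<lambda>\<nu>. a * m \<nu>" "\<bar>a\<bar> * K", OF ThNE bnd that])
  have ple: "p a \<le> B" if "\<And>\<nu>. \<nu> \<in> Th \<Longrightarrow> a * m \<nu> \<le> B" for a B
    unfolding pform by (rule ereal_sup_props(2)[of Th "\<lambda>\<nu>. a * m \<nu>" "\<bar>a\<bar> * K", OF ThNE bnd that])
  have plip1: "p a \<le> p b + K * \<bar>a - b\<bar>" for a b
  proof (rule ple)
    fix \<nu> assume nu: "\<nu> \<in> Th"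
    have "a * m \<nu> = b * m \<nu> + (a - b) * m \<nu>" by (simp add: algebra_simps)
    also have "\<dots> \<le> p b + \<bar>a - b\<bar> * K" using pge[OF nu, of b] bnd[OF nu, of "a - b"] by linarith
    finally show "a * m \<nu> \<le> p b + K * \<bar>a - b\<bar>" by (simp add: mult.commute)
  qed
  have plip: "\<bar>p a - p b\<bar> \<le> K * \<bar>a - b\<bar>" for a b
    using plip1[of a b] plip1[of b a] by (simp add: abs_minus_commute)
  have pcont: "continuous_on UNIV p"
    by (rule lipschitz_on_continuous_on[of K]) (use K0 plip in \<open>simp add: lipschitz_on_def dist_real_def\<close>)
  have pgcont: "continuous_on UNIV (\<lambda>x. p (g x))"
    using continuous_on_compose[OF gc continuous_on_subset[OF pcont]] by (simp add: o_def)

  have opt: "\<And>\<nu>. \<nu> \<in> Th \<Longrightarrow> integral\<^sup>L \<nu> \<phi> \<le> integral\<^sup>L \<mu> \<phi>"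
  proof -
    fix \<nu> assume nu: "\<nu> \<in> Th"
    have "ereal (integral\<^sup>L \<nu> \<phi>) \<le> sublinE Th \<phi>" unfolding sublinE_def using nu by (rule SUP_upper)
    then show "integral\<^sup>L \<nu> \<phi> \<le> integral\<^sup>L \<mu> \<phi>" using optE by (metis ereal_less_eq(3))
  qed
  have phicont: "continuous_on UNIV \<phi>"
    using diff by (metis continuous_at_imp_continuous_on differentiable_imp_continuous_within)
  obtain Bp where Bp: "\<And>x. \<bar>\<phi> x\<bar> \<le> Bp" using bphi unfolding bounded_iff by auto
  obtain Bg where Bg: "\<And>x. \<bar>g x\<bar> \<le> Bg" using bg unfolding bounded_iff by auto
  have intPhi: "\<And>\<nu>. \<nu> \<in> Th \<Longrightarrow> integrable \<nu> \<phi>"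
  proof -
    fix \<nu> assume nu: "\<nu> \<in> Th"
    show "integrable \<nu> \<phi>"
    proof (rule Bochner_Integration.integrable_bound[OF ICONST[OF nu, of Bp]])
      show "\<phi> \<in> borel_measurable \<nu>" by (rule MEAS[OF nu borel_measurable_continuous_onI[OF phicont]])
      show "AE x in \<nu>. norm (\<phi> x) \<le> norm Bp" using Bp by (auto intro!: AE_I2 order.trans[OF _ abs_ge_self])
    qed
  qed
  define c where "c = g 0"
  have tay: "\<And>x. \<bar>\<phi> x - \<phi> 0 - c * x\<bar> \<le> H * \<bar>x\<bar> powr (1+\<alpha>)"
    unfolding c_def g_def by (rule taylor_holder[OF diff a0]) (use hold in \<open>simp add: g_def\<close>)
  have Rb: "\<And>\<nu>. \<nu> \<in> Th \<Longrightarrow> \<bar>integral\<^sup>L \<nu> \<phi> - \<phi> 0 - c * m \<nu>\<bar> \<le> H * M"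
  proof -
    fix \<nu> assume nu: "\<nu> \<in> Th"
    have iR: "integrable \<nu> (\<lambda>x. \<phi> x - \<phi> 0 - c * x)"
      using intPhi[OF nu] ICONST[OF nu] intX[OF nu] by simp
    have "integral\<^sup>L \<nu> (\<lambda>x. \<phi> x - \<phi> 0 - c * x) = integral\<^sup>L \<nu> \<phi> - \<phi> 0 - c * m \<nu>"
      using intPhi[OF nu] ICONST[OF nu] intX[OF nu] LCONST[OF nu] unfolding m_def by simp
    then have "\<bar>integral\<^sup>L \<nu> \<phi> - \<phi> 0 - c * m \<nu>\<bar> = \<bar>integral\<^sup>L \<nu> (\<lambda>x. \<phi> x - \<phi> 0 - c * x)\<bar>" by simp
    also have "\<dots> \<le> integral\<^sup>L \<nu> (\<lambda>x. \<bar>\<phi> x - \<phi> 0 - c * x\<bar>)"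
      using integral_norm_bound[of \<nu> "\<lambda>x. \<phi> x - \<phi> 0 - c * x"] by simp
    also have "\<dots> \<le> integral\<^sup>L \<nu> (\<lambda>x. H * \<bar>x\<bar> powr (1+\<alpha>))"
      using iR intP[OF nu] tay by (intro integral_mono) auto
    also have "\<dots> = H * integral\<^sup>L \<nu> (\<lambda>x. \<bar>x\<bar> powr (1+\<alpha>))" by simp
    also have "\<dots> \<le> H * M" using EP[OF nu] H0 by (rule mult_left_mono)
    finally show "\<bar>integral\<^sup>L \<nu> \<phi> - \<phi> 0 - c * m \<nu>\<bar> \<le> H * M" .
  qed
  have pc_up: "p c \<le> c * m \<mu> + 2 * H * M"
  proof (rule ple)
    fix \<nu> assume nu: "\<nu> \<in> Th"
    show "c * m \<nu> \<le> c * m \<mu> + 2 * H * M"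
      using Rb[OF nu] Rb[OF muTh] opt[OF nu] by linarith
  qed
  have pc_lo: "c * m \<mu> \<le> p c" by (rule pge[OF muTh])

  have gmeas: "g \<in> borel_measurable \<mu>" by (rule MEAS[OF muTh borel_measurable_continuous_onI[OF gc]])
  have pgmeas: "(\<lambda>x. p (g x)) \<in> borel_measurable \<mu>"
    by (rule MEAS[OF muTh borel_measurable_continuous_onI[OF pgcont]])
  have b2: "\<bar>x * (g x - c)\<bar> \<le> H * \<bar>x\<bar> powr (1+\<alpha>)" for x
  proof -
    have "\<bar>x * (g x - c)\<bar> = \<bar>x\<bar> * \<bar>g x - g 0\<bar>" unfolding c_def by (simp add: abs_mult)
    also have "\<dots> \<le> \<bar>x\<bar> * (H * \<bar>x\<bar> powr \<alpha>)" using hold[of x 0] by (intro mult_left_mono) auto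
    also have "\<dots> = H * \<bar>x\<bar> powr (1+\<alpha>)" by (cases "x = 0") (auto simp: powr_add)
    finally show ?thesis .
  qed
  have b3: "\<bar>p (g x) - p c\<bar> \<le> K * H * \<bar>x\<bar> powr \<alpha>" for x
  proof -
    have "\<bar>p (g x) - p c\<bar> \<le> K * \<bar>g x - g 0\<bar>" unfolding c_def by (rule plip)
    also have "\<dots> \<le> K * (H * \<bar>x\<bar> powr \<alpha>)" using hold[of x 0] K0 by (intro mult_left_mono) auto
    finally show ?thesis by (simp add: mult.assoc)
  qed
  have iHP: "integrable \<mu> (\<lambda>x. H * \<bar>x\<bar> powr (1+\<alpha>))" using intP[OF muTh] by simp
  have iKA: "integrable \<mu> (\<lambda>x. K * H * \<bar>x\<bar> powr \<alpha>)" using intA by simp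
  have i1: "integrable \<mu> (\<lambda>x. c * x - p c)" using intX[OF muTh] ICONST[OF muTh] by simp
  have i2: "integrable \<mu> (\<lambda>x. x * (g x - c))"
  proof (rule Bochner_Integration.integrable_bound[OF iHP])
    show "(\<lambda>x. x * (g x - c)) \<in> borel_measurable \<mu>" by (rule MEAS[OF muTh]) (use borel_measurable_continuous_onI[OF gc] in measurable)
    show "AE x in \<mu>. norm (x * (g x - c)) \<le> norm (H * \<bar>x\<bar> powr (1+\<alpha>))"
      using b2 H0 by (auto intro!: AE_I2 order.trans[OF _ abs_ge_self])
  qed
  have i3: "integrable \<mu> (\<lambda>x. p (g x) - p c)"
  proof (rule Bochner_Integration.integrable_bound[OF iKA])
    show "(\<lambda>x. p (g x) - p c) \<in> borel_measurable \<mu>" by (rule MEAS[OF muTh]) (use borel_measurable_continuous_onI[OF pgcont] in measurable)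
    show "AE x in \<mu>. norm (p (g x) - p c) \<le> norm (K * H * \<bar>x\<bar> powr \<alpha>)"
      using b3 by (auto intro!: AE_I2 order.trans[OF _ abs_ge_self])
  qed
  have eqf: "(\<lambda>x. x * g x - p (g x)) = (\<lambda>x. (c * x - p c) + x * (g x - c) - (p (g x) - p c))"
    by (auto simp: algebra_simps)
  have I: "integral\<^sup>L \<mu> (\<lambda>x. x * g x - p (g x)) =
      integral\<^sup>L \<mu> (\<lambda>x. c * x - p c) + integral\<^sup>L \<mu> (\<lambda>x. x * (g x - c)) - integral\<^sup>L \<mu> (\<lambda>x. p (g x) - p c)"
    unfolding eqf by (simp only: Bochner_Integration.integral_diff[OF Bochner_Integration.integrable_add[OF i1 i2] i3] Bochner_Integration.integral_add[OF i1 i2])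
  have I1: "integral\<^sup>L \<mu> (\<lambda>x. c * x - p c) = c * m \<mu> - p c"
    using intX[OF muTh] ICONST[OF muTh] LCONST[OF muTh] unfolding m_def by simp
  have I2: "\<bar>integral\<^sup>L \<mu> (\<lambda>x. x * (g x - c))\<bar> \<le> H * M"
  proof -
    have "\<bar>integral\<^sup>L \<mu> (\<lambda>x. x * (g x - c))\<bar> \<le> integral\<^sup>L \<mu> (\<lambda>x. \<bar>x * (g x - c)\<bar>)"
      using integral_norm_bound[of \<mu> "\<lambda>x. x * (g x - c)"] by simp
    also have "\<dots> \<le> integral\<^sup>L \<mu> (\<lambda>x. H * \<bar>x\<bar> powr (1+\<alpha>))"
      using i2 iHP b2 by (intro integral_mono) auto
    also have "\<dots> = H * integral\<^sup>L \<mu> (\<lambda>x. \<bar>x\<bar> powr (1+\<alpha>))" by simp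
    also have "\<dots> \<le> H * M" using EP[OF muTh] H0 by (rule mult_left_mono)
    finally show ?thesis .
  qed
  have I3: "\<bar>integral\<^sup>L \<mu> (\<lambda>x. p (g x) - p c)\<bar> \<le> H * M"
  proof -
    have "\<bar>integral\<^sup>L \<mu> (\<lambda>x. p (g x) - p c)\<bar> \<le> integral\<^sup>L \<mu> (\<lambda>x. \<bar>p (g x) - p c\<bar>)"
      using integral_norm_bound[of \<mu> "\<lambda>x. p (g x) - p c"] by simp
    also have "\<dots> \<le> integral\<^sup>L \<mu> (\<lambda>x. K * H * \<bar>x\<bar> powr \<alpha>)"
      using i3 iKA b3 by (intro integral_mono) auto
    also have "\<dots> = H * (K * A)" unfolding A_def by simp
    also have "\<dots> \<le> H * M" using KA H0 by (rule mult_left_mono)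
    finally show ?thesis .
  qed
  have final: "\<bar>integral\<^sup>L \<mu> (\<lambda>x. x * g x - p (g x))\<bar> \<le> 4 * H * M"
    unfolding I I1 using I2 I3 pc_up pc_lo by linarith
  show ?thesis using final unfolding g_def p_def H_def M_def Mnn_def .
qed
end
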